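(* Let $S$ be a set, let $\mathcal{T}\subseteq \mathcal{P}(S)$ be a nonempty family containing a countable subfamily that separates points of $S$, and let $\mathcal{H}\subseteq\mathcal{P}(S)$ be a semiring. Then $\mathcal{C}(\mathcal{T})\subseteq\mathcal{C}(\mathcal{H})$ if and only if every element of $\mathcal{T}$ is a countable union of sets from $\mathcal{H}$.
   Context: $C(S)$ is the set of countable subsets of $S$; $N_A(M)=|A\cap M|$ for $A\subseteq S$, $M\in C(S)$; for nonempty $\mathcal{T}\subseteq\mathcal{P}(S)$, $\mathcal{C}(\mathcal{T})=\sigma(N_A\mid A\in\mathcal{T})$ (a $\sigma$-field on $C(S)$). A family $\mathcal{E}$ separates points of $S$ if for any distinct $x,y\in S$ there is $A\in\mathcal{E}$ with $1_A(x)\ne1_A(y)$. *)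

theory Defs
  imports "HOL-Analysis.Analysis"
begin

definition cntsets :: "'a set \<Rightarrow> 'a set set" where
  "cntsets S = {M. M \<subseteq> S \<and> countable M}"

definition Ncount :: "'a set \<Rightarrow> 'a set \<Rightarrow> enat" where
  "Ncount A M = (if finite (A \<inter> M) then enat (card (A \<inter> M)) else \<infinity>)"

text \<open>\<C>(\<T>) = \<sigma>(N_A | A \<in> \<T>) on C(S), with the discrete \<sigma>-field on the
  (countable) value space of extended naturals.\<close>
definition CC :: "'a set \<Rightarrow> 'a set set \<Rightarrow> 'a set set set" where
  "CC S T = sigma_sets (cntsets S)
     {{M \<in> cntsets S. Ncount A M \<in> B} | A B. A \<in> T}"

definition separates_points :: "'a set \<Rightarrow> 'a set set \<Rightarrow> bool" where
  "separates_points S E \<longleftrightarrow>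
     (\<forall>x\<in>S. \<forall>y\<in>S. x \<noteq> y \<longrightarrow> (\<exists>A\<in>E. (x \<in> A) \<noteq> (y \<in> A)))"

end

theory Submission
  imports Defs
begin


lemma Ncount_zero_iff: "Ncount A M = 0 \<longleftrightarrow> A \<inter> M = {}"
  unfolding Ncount_def by (auto simp: zero_enat_def)

lemma Ncount_cong: "A \<inter> M = A' \<inter> M' \<Longrightarrow> Ncount A M = Ncount A' M'"
  unfolding Ncount_def by simp

lemma Ncount_inf: "infinite (A \<inter> M) \<Longrightarrow> Ncount A M = \<infinity>"
  unfolding Ncount_def by auto

definition invG :: "'a set \<Rightarrow> 'a set set \<Rightarrow> 'a set set \<Rightarrow> 'a set set \<Rightarrow> bool" where
  "invG S H X G \<longleftrightarrow> countable G \<and> G \<subseteq> H \<and> (\<forall>M\<in>cntsets S. \<forall>M'\<in>cntsets S.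
           (\<forall>B\<in>G. Ncount B M = Ncount B M') \<longrightarrow> (M \<in> X \<longleftrightarrow> M' \<in> X))"

lemma invG_D1: "invG S H X G \<Longrightarrow> countable G"
  unfolding invG_def by (rule conjunct1)
lemma invG_D2: "invG S H X G \<Longrightarrow> G \<subseteq> H"
  unfolding invG_def by (rule conjunct1[OF conjunct2])
lemma invG_D3: assumes "invG S H X G" "M \<in> cntsets S" "M' \<in> cntsets S"
   "\<forall>B\<in>G. Ncount B M = Ncount B M'" shows "M \<in> X \<longleftrightarrow> M' \<in> X"
proof -
  have "\<forall>M\<in>cntsets S. \<forall>M'\<in>cntsets S.
           (\<forall>B\<in>G. Ncount B M = Ncount B M') \<longrightarrow> (M \<in> X \<longleftrightarrow> M' \<in> X)"
    using assms(1) unfolding invG_def by (rule conjunct2[OF conjunct2])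
  then have "(\<forall>B\<in>G. Ncount B M = Ncount B M') \<longrightarrow> (M \<in> X \<longleftrightarrow> M' \<in> X)"
    using assms(2,3) by blast
  then show ?thesis using assms(4) by (rule mp)
qed
lemma invG_I: "countable G \<Longrightarrow> G \<subseteq> H \<Longrightarrow> (\<And>M M'. M \<in> cntsets S \<Longrightarrow> M' \<in> cntsets S \<Longrightarrow>
   (\<forall>B\<in>G. Ncount B M = Ncount B M') \<Longrightarrow> (M \<in> X \<longleftrightarrow> M' \<in> X)) \<Longrightarrow> invG S H X G"
  unfolding invG_def by blast

lemma sigma_inv:
  assumes "X \<in> sigma_sets (cntsets S) {{M \<in> cntsets S. Ncount A M \<in> B} | A B. A \<in> H}"
  shows "\<exists>G. invG S H X G"
  using assms
proof (induction rule: sigma_sets.induct)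
  case (Basic a)
  then obtain A B where a: "a = {M \<in> cntsets S. Ncount A M \<in> B}" "A \<in> H" by blast
  have "invG S H a {A}"
  proof (rule invG_I)
    fix M M' assume "M \<in> cntsets S" "M' \<in> cntsets S" "\<forall>B\<in>{A}. Ncount B M = Ncount B M'"
    then show "M \<in> a \<longleftrightarrow> M' \<in> a" unfolding a by simp
  qed (use a in auto)
  then show ?case ..
next
  case Empty
  have "invG S H {} {}" by (rule invG_I) auto
  then show ?case ..
next
  case (Compl a)
  from Compl.IH obtain G where G: "invG S H a G" ..
  have "invG S H (cntsets S - a) G"
  proof (rule invG_I)
    fix M M' assume MM: "M \<in> cntsets S" "M' \<in> cntsets S" and eq: "\<forall>B\<in>G. Ncount B M = Ncount B M'"
    have "M \<in> a \<longleftrightarrow> M' \<in> a" by (rule invG_D3[OF G MM eq])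
    then show "M \<in> cntsets S - a \<longleftrightarrow> M' \<in> cntsets S - a" using MM by blast
  qed (use invG_D1[OF G] invG_D2[OF G] in auto)
  then show ?case ..
next
  case (Union a)
  from Union.IH have "\<forall>i. \<exists>G. invG S H (a i) G" by blast
  then obtain Gf where Gf: "\<forall>i. invG S H (a i) (Gf i)" by (rule choice[THEN exE])
  have "invG S H (\<Union>i. a i) (\<Union>i. Gf i)"
  proof (rule invG_I)
    show "countable (\<Union>i. Gf i)" using Gf invG_D1 by blast
    show "(\<Union>i. Gf i) \<subseteq> H" using Gf invG_D2 by blast
    fix M M' assume MM: "M \<in> cntsets S" "M' \<in> cntsets S" and eq: "\<forall>B\<in>(\<Union>i. Gf i). Ncount B M = Ncount B M'"
    have "M \<in> a i \<longleftrightarrow> M' \<in> a i" for i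
    proof -
      have "\<forall>B\<in>Gf i. Ncount B M = Ncount B M'" using eq by blast
      then show ?thesis using Gf invG_D3 MM by blast
    qed
    then show "M \<in> (\<Union>i. a i) \<longleftrightarrow> M' \<in> (\<Union>i. a i)" by blast
  qed
  then show ?case ..
qed

lemma core:
  assumes sr: "semiring_of_sets S H" and cG: "countable G" and GH: "G \<subseteq> H"
    and sep: "\<And>x y. x \<in> S \<Longrightarrow> y \<in> S \<Longrightarrow> (\<And>B. B \<in> G \<Longrightarrow> x \<in> B \<longleftrightarrow> y \<in> B) \<Longrightarrow> x = y"
    and inv: "\<And>M M'. M \<in> cntsets S \<Longrightarrow> M' \<in> cntsets S \<Longrightarrow>
           (\<And>B. B \<in> G \<Longrightarrow> Ncount B M = Ncount B M') \<Longrightarrow> (A \<inter> M = {} \<longleftrightarrow> A \<inter> M' = {})"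
    and AS: "A \<subseteq> S"
  shows "\<exists>F. countable F \<and> F \<subseteq> H \<and> A = \<Union>F"
proof -
  interpret semiring_of_sets S H by (rule sr)
  have claim: "\<exists>F1 F2. finite F1 \<and> finite F2 \<and> F1 \<subseteq> G \<and> F2 \<subseteq> G \<and> F1 \<noteq> {} \<and>
      x \<in> \<Inter>F1 - \<Union>F2 \<and> \<Inter>F1 - \<Union>F2 \<subseteq> A" if xA: "x \<in> A" for x
  proof (rule ccontr)
    assume nc: "\<not> ?thesis"
    have xS: "x \<in> S" using xA AS by blast
    have "\<exists>B0\<in>G. x \<in> B0"
    proof (rule ccontr)
      assume "\<not> ?thesis"
      then have "Ncount B {} = Ncount B {x}" if "B \<in> G" for B
        using that by (intro Ncount_cong) blast
      moreover have "{} \<in> cntsets S" "{x} \<in> cntsets S" using xS by (auto simp: cntsets_def)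
      ultimately have "A \<inter> {} = {} \<longleftrightarrow> A \<inter> {x} = {}" by (intro inv)
      then show False using xA by blast
    qed
    then obtain B0 where B0: "B0 \<in> G" "x \<in> B0" by blast
    define g where "g = from_nat_into G"
    have Gne: "G \<noteq> {}" using B0 by blast
    have gG: "g i \<in> G" for i unfolding g_def by (rule from_nat_into[OF Gne])
    have rg: "range g = G" unfolding g_def by (rule range_from_nat_into[OF Gne cG])
    define F1 where "F1 n = insert B0 (g ` {i. i \<le> n \<and> x \<in> g i})" for n
    define F2 where "F2 n = g ` {i. i \<le> n \<and> x \<notin> g i}" for n
    have "\<exists>y. y \<in> \<Inter>(F1 n) - \<Union>(F2 n) \<and> y \<notin> A" for n
    proof -
      have "finite (F1 n)" "finite (F2 n)" "F1 n \<subseteq> G" "F2 n \<subseteq> G" "F1 n \<noteq> {}"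
        "x \<in> \<Inter>(F1 n) - \<Union>(F2 n)"
        using B0 gG by (auto simp: F1_def F2_def)
      note fin = this
      show ?thesis
      proof (rule ccontr)
        assume "\<not> ?thesis"
        then have "\<Inter>(F1 n) - \<Union>(F2 n) \<subseteq> A" by blast
        with fin have "\<exists>F1 F2. finite F1 \<and> finite F2 \<and> F1 \<subseteq> G \<and> F2 \<subseteq> G \<and> F1 \<noteq> {} \<and>
          x \<in> \<Inter>F1 - \<Union>F2 \<and> \<Inter>F1 - \<Union>F2 \<subseteq> A"
          by (intro exI[of _ "F1 n"] exI[of _ "F2 n"]) simp
        with nc show False by (rule notE)
      qed
    qed
    then have "\<forall>n. \<exists>y. y \<in> \<Inter>(F1 n) - \<Union>(F2 n) \<and> y \<notin> A" by blast
    then obtain y where y: "\<forall>n. y n \<in> \<Inter>(F1 n) - \<Union>(F2 n) \<and> y n \<notin> A"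
      by (rule choice[THEN exE])
    have yB0: "y n \<in> B0" for n using y[rule_format, of n] by (auto simp: F1_def)
    have yg: "i \<le> n \<Longrightarrow> y n \<in> g i \<longleftrightarrow> x \<in> g i" for i n
      using y[rule_format, of n] by (auto simp: F1_def F2_def)
    have B0S: "B0 \<subseteq> S" using B0 GH sets_into_space by blast
    define M where "M = range y"
    have M: "M \<in> cntsets S" "insert x M \<in> cntsets S"
      using yB0 B0S xS by (auto simp: cntsets_def M_def)
    have AM: "A \<inter> M = {}" using y by (auto simp: M_def)
    have AM': "A \<inter> insert x M \<noteq> {}" using xA by auto
    have "Ncount B M = Ncount B (insert x M)" if BG: "B \<in> G" for B
    proof (cases "x \<in> B")
      case False
      then have "B \<inter> M = B \<inter> insert x M" by auto
      then show ?thesis by (rule Ncount_cong)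
    next
      case True
      obtain k where k: "B = g k" using BG rg by blast
      have "infinite (B \<inter> M)"
      proof
        assume fin: "finite (B \<inter> M)"
        have "y ` {k..} \<subseteq> B \<inter> M" using yg True k by (auto simp: M_def)
        then have "finite (y ` {k..})" using fin finite_subset by blast
        moreover have inf_k: "infinite {k::nat..}" unfolding infinite_nat_iff_unbounded_le by (meson atLeast_iff le_cases le_trans)
        ultimately obtain n0 where n0: "n0 \<in> {k..}"
          "infinite {n \<in> {k..}. y n = y n0}" using pigeonhole_infinite[OF inf_k] by blast
        define z where "z = y n0"
        have "z \<in> C \<longleftrightarrow> x \<in> C" if CG: "C \<in> G" for C
        proof -
          obtain j where j: "C = g j" using CG rg by blast
          obtain n where "n \<ge> j" "n \<in> {n \<in> {k..}. y n = y n0}"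
            using n0(2) unfolding infinite_nat_iff_unbounded_le by blast
          then show ?thesis using yg[of j n] j z_def by auto
        qed
        moreover have "z \<in> S" using yB0 B0S z_def by blast
        ultimately have "z = x" using xS by (intro sep) auto
        then show False using y[rule_format, of n0] xA z_def by blast
      qed
      moreover have "infinite (B \<inter> insert x M)"
        using calculation by (meson Int_mono finite_subset order_refl subset_insertI)
      ultimately show ?thesis by (simp add: Ncount_inf)
    qed
    then have "A \<inter> M = {} \<longleftrightarrow> A \<inter> insert x M = {}" using M by (intro inv)
    then show False using AM AM' by blast
  qed
  define P where "P = {(F1,F2). finite F1 \<and> finite F2 \<and> F1 \<subseteq> G \<and> F2 \<subseteq> G
      \<and> F1 \<noteq> {} \<and> \<Inter>F1 - \<Union>F2 \<subseteq> A}"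
  define Rs where "Rs = (\<lambda>(F1,F2). \<Inter>F1 - \<Union>F2) ` P"
  have "P \<subseteq> {F. finite F \<and> F \<subseteq> G} \<times> {F. finite F \<and> F \<subseteq> G}"
    unfolding P_def by auto
  moreover have "countable ({F. finite F \<and> F \<subseteq> G} \<times> {F. finite F \<and> F \<subseteq> G})"
    using countable_Collect_finite_subset[OF cG] by (intro countable_SIGMA)
  ultimately have "countable P" by (rule countable_subset)
  then have cRs: "countable Rs" unfolding Rs_def by (rule countable_image)
  interpret R: ring_of_sets S generated_ring by (rule generating_ring)
  have "\<exists>C. finite C \<and> C \<subseteq> H \<and> R = \<Union>C" if RR: "R \<in> Rs" for R
  proof -
    obtain F1 F2 where F0: "(F1,F2) \<in> P" "R = \<Inter>F1 - \<Union>F2"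
      using RR unfolding Rs_def by auto
    then have F: "R = \<Inter>F1 - \<Union>F2" "finite F1" "finite F2" "F1 \<subseteq> G" "F2 \<subseteq> G" "F1 \<noteq> {}"
      unfolding P_def by auto
    have "(\<Inter>i\<in>F1. i) \<in> H" using F GH by (intro finite_INT) auto
    then have "\<Inter>F1 \<in> generated_ring" by (simp add: generated_ringI_Basic)
    moreover have "\<Union>F2 \<in> generated_ring"
      using F GH generated_ringI_Basic by (intro R.finite_Union) auto
    ultimately have "R \<in> generated_ring" unfolding F(1) by (rule R.Diff)
    then obtain C where "finite C" "disjoint C" "C \<subseteq> H" "R = \<Union>C" by (rule generated_ringE)
    then show ?thesis by blast
  qed
  then have "\<forall>R\<in>Rs. \<exists>C. finite C \<and> C \<subseteq> H \<and> R = \<Union>C" by blast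
  then obtain Cf where Cf0: "\<forall>R\<in>Rs. finite (Cf R) \<and> Cf R \<subseteq> H \<and> R = \<Union>(Cf R)"
    by (rule bchoice[THEN exE])
  have Cf: "finite (Cf R) \<and> Cf R \<subseteq> H \<and> R = \<Union>(Cf R)" if "R \<in> Rs" for R
    using Cf0 that by blast
  show ?thesis
  proof (intro exI[of _ "\<Union>(Cf ` Rs)"] conjI)
    show "countable (\<Union>(Cf ` Rs))" using cRs Cf by (intro countable_UN) (auto intro: countable_finite)
    show "\<Union>(Cf ` Rs) \<subseteq> H" using Cf by blast
    have eqR: "\<Union>(Cf R) = R" if "R \<in> Rs" for R using Cf[OF that] by (elim conjE) (rule sym)
    have "\<Union>(\<Union>(Cf ` Rs)) = (\<Union>R\<in>Rs. \<Union>(Cf R))" by blast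
    also have "\<dots> = (\<Union>R\<in>Rs. R)" using eqR by simp
    also have "\<dots> = \<Union>Rs" by simp
    also have "\<dots> = A"
    proof
      show "\<Union>Rs \<subseteq> A" unfolding Rs_def P_def by auto
      show "A \<subseteq> \<Union>Rs"
      proof
        fix x assume "x \<in> A"
        from claim[OF this] obtain F1 F2 where FF: "finite F1 \<and> finite F2 \<and> F1 \<subseteq> G \<and> F2 \<subseteq> G \<and> F1 \<noteq> {} \<and>
          x \<in> \<Inter>F1 - \<Union>F2 \<and> \<Inter>F1 - \<Union>F2 \<subseteq> A" by blast
        then have "(F1,F2) \<in> P" unfolding P_def by simp
        then have "\<Inter>F1 - \<Union>F2 \<in> Rs" unfolding Rs_def by (rule image_eqI[rotated]) simp
        moreover have "x \<in> \<Inter>F1 - \<Union>F2" using FF by blast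
        ultimately show "x \<in> \<Union>Rs" by (rule UnionI)
      qed
    qed
    finally show "A = \<Union>(\<Union>(Cf ` Rs))" by simp
  qed
qed



definition gens :: "'a set \<Rightarrow> 'a set set \<Rightarrow> 'a set set set" where
  "gens S H = {{M \<in> cntsets S. Ncount A M \<in> B} | A B. A \<in> H}"

lemma gens_Pow: "gens S H \<subseteq> Pow (cntsets S)"
  unfolding gens_def by auto

definition Mh :: "'a set \<Rightarrow> 'a set set \<Rightarrow> 'a set measure" where
  "Mh S H = sigma (cntsets S) (gens S H)"

lemma sets_Mh: "sets (Mh S H) = sigma_sets (cntsets S) (gens S H)"
  unfolding Mh_def by (rule sets_measure_of[OF gens_Pow])

lemma space_Mh: "space (Mh S H) = cntsets S"
  unfolding Mh_def by (rule space_measure_of[OF gens_Pow])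

definition good :: "'a set \<Rightarrow> 'a set set \<Rightarrow> 'a set \<Rightarrow> bool" where
  "good S H D \<longleftrightarrow> Ncount D \<in> Mh S H \<rightarrow>\<^sub>M count_space UNIV"

lemma good_H: assumes "D \<in> H" shows "good S H D"
  unfolding good_def
proof (rule measurableI)
  fix B :: "enat set"
  have "Ncount D -` B \<inter> space (Mh S H) = {M \<in> cntsets S. Ncount D M \<in> B}"
    unfolding space_Mh by auto
  also have "\<dots> \<in> gens S H" unfolding gens_def using assms by (intro CollectI exI[of _ D] exI[of _ B]) simp
  finally show "Ncount D -` B \<inter> space (Mh S H) \<in> sets (Mh S H)"
    unfolding sets_Mh by (rule sigma_sets.Basic)
next
  fix x assume "x \<in> space (Mh S H)"
  show "Ncount D x \<in> space (count_space UNIV)" by simp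
qed

lemma good_empty: "good S H {}"
proof -
  have eq: "Ncount {} = (\<lambda>M. 0::enat)" by (rule ext) (simp add: Ncount_def zero_enat_def)
  show ?thesis unfolding good_def eq by (rule measurable_const) simp
qed

lemma Ncount_Un_disj:
  assumes "D \<inter> E = {}" shows "Ncount (D \<union> E) M = Ncount D M + Ncount E M"
proof -
  have eq: "(D \<union> E) \<inter> M = (D \<inter> M) \<union> (E \<inter> M)" by blast
  have dj: "(D \<inter> M) \<inter> (E \<inter> M) = {}" using assms by blast
  show ?thesis
  proof (cases "finite (D \<inter> M) \<and> finite (E \<inter> M)")
    case True
    then show ?thesis unfolding Ncount_def eq using card_Un_disjoint[OF _ _ dj] by simp
  next
    case False
    then show ?thesis unfolding Ncount_def eq by auto
  qed
qed

lemma good_Un: assumes "good S H D" "good S H E" "D \<inter> E = {}" shows "good S H (D \<union> E)"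
proof -
  have cU: "countable (UNIV :: (enat \<times> enat) set)" by (rule countableI_type)
  have "(\<lambda>M. (Ncount D M, Ncount E M)) \<in> Mh S H \<rightarrow>\<^sub>M count_space UNIV \<Otimes>\<^sub>M count_space UNIV"
    using assms(1,2) unfolding good_def by (rule measurable_Pair)
  then have p: "(\<lambda>M. (Ncount D M, Ncount E M)) \<in> Mh S H \<rightarrow>\<^sub>M count_space UNIV"
    using pair_measure_countable[OF countableI_type countableI_type, of UNIV UNIV]
    by simp
  have "(\<lambda>M. case_prod (+) (Ncount D M, Ncount E M)) \<in> Mh S H \<rightarrow>\<^sub>M count_space UNIV"
    by (rule measurable_compose[OF p measurable_count_space])
  moreover have "Ncount (D \<union> E) = (\<lambda>M. case_prod (+) (Ncount D M, Ncount E M))"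
    using Ncount_Un_disj[OF assms(3)] by (intro ext) simp
  ultimately show ?thesis unfolding good_def by simp
qed

lemma good_fin: "finite C \<Longrightarrow> disjoint C \<Longrightarrow> C \<subseteq> H \<Longrightarrow> good S H (\<Union>C)"
proof (induction C rule: finite_induct)
  case empty
  then show ?case using good_empty by simp
next
  case (insert c C)
  have "disjoint C" using insert.prems(1) by (simp add: pairwise_insert)
  then have g1: "good S H (\<Union>C)" using insert by simp
  have g2: "good S H c" using insert.prems(2) by (intro good_H) simp
  have "c \<inter> \<Union>C = {}" using insert.prems(1) insert.hyps(2)
    by (auto simp: pairwise_insert disjnt_def)
  then have "good S H (c \<union> \<Union>C)" by (rule good_Un[OF g2 g1])
  then show ?case by simp
qed

lemma ge_iff: "enat k \<le> Ncount D M \<longleftrightarrow> (\<exists>K. K \<subseteq> D \<inter> M \<and> finite K \<and> card K = k)"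
proof (cases "finite (D \<inter> M)")
  case True
  show ?thesis
  proof
    assume "enat k \<le> Ncount D M"
    then have "k \<le> card (D \<inter> M)" using True unfolding Ncount_def by simp
    then obtain K where "K \<subseteq> D \<inter> M" "card K = k" "finite K" by (rule obtain_subset_with_card_n)
    then show "\<exists>K. K \<subseteq> D \<inter> M \<and> finite K \<and> card K = k" by blast
  next
    assume "\<exists>K. K \<subseteq> D \<inter> M \<and> finite K \<and> card K = k"
    then obtain K where "K \<subseteq> D \<inter> M" "card K = k" by blast
    then have "k \<le> card (D \<inter> M)" using True card_mono by blast
    then show "enat k \<le> Ncount D M" using True unfolding Ncount_def by simp
  qed
next
  case False
  then show ?thesis using infinite_arbitrarily_large[OF False, of k] unfolding Ncount_def by auto
qed

lemma finite_in_incseq: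
  assumes "incseq A" "finite K" "K \<subseteq> (\<Union>n. A n)" shows "\<exists>n. K \<subseteq> A n"
  using assms(2,3)
proof (induction K rule: finite_induct)
  case empty
  then show ?case by simp
next
  case (insert x K)
  then obtain n where n: "K \<subseteq> A n" by auto
  obtain m where m: "x \<in> A m" using insert.prems by auto
  have "A n \<subseteq> A (max n m)" "A m \<subseteq> A (max n m)"
    using assms(1) unfolding incseq_def by auto
  then show ?case using n m by (intro exI[of _ "max n m"]) auto
qed

lemma enat_eq_iff: "(x = enat k) \<longleftrightarrow> (enat k \<le> x \<and> \<not> enat (Suc k) \<le> x)"
  by (cases x) auto

lemma enat_inf_iff: "(x = \<infinity>) \<longleftrightarrow> (\<forall>k. enat k \<le> x)"
proof (cases x)
  case (enat m)
  have "\<not> enat (Suc m) \<le> enat m" by simp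
  then show ?thesis using enat by blast
qed simp

lemma good_inc:
  assumes inc: "incseq A" and g: "\<And>n. good S H (A n)" shows "good S H (\<Union>n. A n)"
proof -
  let ?U = "\<Union>n. A n"
  have key: "enat k \<le> Ncount ?U M \<longleftrightarrow> (\<exists>n. enat k \<le> Ncount (A n) M)" for k M
  proof
    assume "enat k \<le> Ncount ?U M"
    then obtain K where K: "K \<subseteq> ?U \<inter> M" "finite K" "card K = k" unfolding ge_iff by blast
    then obtain n where "K \<subseteq> A n" using finite_in_incseq[OF inc, of K] by blast
    then have "K \<subseteq> A n \<inter> M" using K by blast
    then show "\<exists>n. enat k \<le> Ncount (A n) M" unfolding ge_iff using K by blast
  next
    assume "\<exists>n. enat k \<le> Ncount (A n) M"
    then obtain n K where K: "K \<subseteq> A n \<inter> M" "finite K" "card K = k" unfolding ge_iff by blast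
    then have "K \<subseteq> ?U \<inter> M" by blast
    then show "enat k \<le> Ncount ?U M" unfolding ge_iff using K by blast
  qed
  define L where "L k = {M \<in> space (Mh S H). enat k \<le> Ncount ?U M}" for k
  have L: "L k \<in> sets (Mh S H)" for k
  proof -
    have "L k = (\<Union>n. Ncount (A n) -` {enat k..} \<inter> space (Mh S H))"
      unfolding L_def key by auto
    also have "\<dots> \<in> sets (Mh S H)"
      using g unfolding good_def by (intro sets.countable_UN) (auto intro: measurable_sets)
    finally show ?thesis .
  qed
  have "Ncount ?U \<in> Mh S H \<rightarrow>\<^sub>M count_space UNIV"
    unfolding measurable_count_space_eq_countable[OF countableI_type]
  proof (intro conjI ballI)
    show "Ncount ?U \<in> space (Mh S H) \<rightarrow> UNIV" by simp
    fix a :: enat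
    show "Ncount ?U -` {a} \<inter> space (Mh S H) \<in> sets (Mh S H)"
    proof (cases a)
      case (enat k)
      have "Ncount ?U -` {a} \<inter> space (Mh S H) = L k - L (Suc k)"
        unfolding L_def enat by (auto simp: enat_eq_iff)
      then show ?thesis using L by auto
    next
      case infinity
      have "Ncount ?U -` {a} \<inter> space (Mh S H) = (\<Inter>k. L k)"
        unfolding L_def infinity by (auto simp: enat_inf_iff)
      then show ?thesis using L by auto
    qed
  qed
  then show ?thesis unfolding good_def .
qed



lemma Ncount_single: "Ncount B {x} = (if x \<in> B then 1 else 0)"
  unfolding Ncount_def by (simp add: one_enat_def zero_enat_def)

theorem theorem3p5:
  fixes S :: "'a set" and T H :: "'a set set"
  assumes "T \<noteq> {}" and "T \<subseteq> Pow S"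
    and "\<exists>E\<subseteq>T. countable E \<and> separates_points S E"
    and "semiring_of_sets S H"
  shows "CC S T \<subseteq> CC S H \<longleftrightarrow>
         (\<forall>A\<in>T. \<exists>F. countable F \<and> F \<subseteq> H \<and> A = \<Union>F)"
proof
  interpret semiring_of_sets S H by (rule assms(4))
  assume incl: "CC S T \<subseteq> CC S H"
  define X where "X A = {M \<in> cntsets S. Ncount A M \<in> {0}}" for A
  have "\<exists>G. invG S H (X A) G" if AT: "A \<in> T" for A
  proof -
    have "X A \<in> CC S T" unfolding CC_def X_def
      by (rule sigma_sets.Basic) (use AT in blast)
    then have "X A \<in> CC S H" using incl by blast
    then show ?thesis unfolding CC_def by (rule sigma_inv)
  qed
  then have "\<forall>A\<in>T. \<exists>G. invG S H (X A) G" by blast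
  then obtain Gf where Gf: "\<forall>A\<in>T. invG S H (X A) (Gf A)" by (rule bchoice[THEN exE])
  obtain E where E: "E \<subseteq> T" "countable E" "separates_points S E" using assms(3) by blast
  have XM: "M \<in> X A \<longleftrightarrow> M \<in> cntsets S \<and> A \<inter> M = {}" for A M
    unfolding X_def using Ncount_zero_iff by auto
  show "\<forall>A\<in>T. \<exists>F. countable F \<and> F \<subseteq> H \<and> A = \<Union>F"
  proof
    fix A assume AT: "A \<in> T"
    define G where "G = Gf A \<union> \<Union>(Gf ` E)"
    have GfA: "invG S H (X A) (Gf A)" using Gf AT by blast
    have GfE: "invG S H (X e) (Gf e)" if "e \<in> E" for e using Gf E(1) that by blast
    show "\<exists>F. countable F \<and> F \<subseteq> H \<and> A = \<Union>F"
    proof (rule core[OF assms(4)])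
      have "countable (\<Union>(Gf ` E))" by (rule countable_UN[OF E(2)]) (rule invG_D1[OF GfE])
      then show "countable G" unfolding G_def using invG_D1[OF GfA] by (rule countable_Un[rotated])
      show "G \<subseteq> H" unfolding G_def
        using invG_D2[OF GfA] invG_D2[OF GfE] by blast
      show "A \<subseteq> S" using AT assms(2) by blast
    next
      fix M M' assume MM: "M \<in> cntsets S" "M' \<in> cntsets S"
        and eq: "\<And>B. B \<in> G \<Longrightarrow> Ncount B M = Ncount B M'"
      have "\<forall>B\<in>Gf A. Ncount B M = Ncount B M'" using eq unfolding G_def by blast
      then have "M \<in> X A \<longleftrightarrow> M' \<in> X A" by (rule invG_D3[OF GfA MM])
      then show "A \<inter> M = {} \<longleftrightarrow> A \<inter> M' = {}" using MM unfolding XM by blast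
    next
      fix x y assume xy: "x \<in> S" "y \<in> S" and same: "\<And>B. B \<in> G \<Longrightarrow> x \<in> B \<longleftrightarrow> y \<in> B"
      show "x = y"
      proof (rule ccontr)
        assume "x \<noteq> y"
        then obtain e where e: "e \<in> E" "(x \<in> e) \<noteq> (y \<in> e)"
          using E(3) xy unfolding separates_points_def by blast
        have "Ncount B {x} = Ncount B {y}" if "B \<in> Gf e" for B
        proof -
          have "x \<in> B \<longleftrightarrow> y \<in> B" using same that e(1) unfolding G_def by blast
          then show ?thesis by (simp add: Ncount_single)
        qed
        then have "\<forall>B\<in>Gf e. Ncount B {x} = Ncount B {y}" by blast
        moreover have "{x} \<in> cntsets S" "{y} \<in> cntsets S" using xy by (auto simp: cntsets_def)
        ultimately have "{x} \<in> X e \<longleftrightarrow> {y} \<in> X e" by (intro invG_D3[OF GfE[OF e(1)]])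
        then have "e \<inter> {x} = {} \<longleftrightarrow> e \<inter> {y} = {}" using xy unfolding XM by (auto simp: cntsets_def)
        then show False using e(2) by blast
      qed
    qed
  qed
next
  interpret semiring_of_sets S H by (rule assms(4))
  interpret R: ring_of_sets S generated_ring by (rule generating_ring)
  assume cov: "\<forall>A\<in>T. \<exists>F. countable F \<and> F \<subseteq> H \<and> A = \<Union>F"
  have goodT: "good S H A" if AT: "A \<in> T" for A
  proof -
    from bspec[OF cov AT] obtain F where F0: "countable F \<and> F \<subseteq> H \<and> A = \<Union>F" ..
    then have F: "countable F" "F \<subseteq> H" "A = \<Union>F" by simp_all
    show ?thesis
    proof (cases "F = {}")
      case True
      then have "A = {}" using F(3) by simp
      then show ?thesis using good_empty by simp
    next
      case False
      define g where "g = from_nat_into F"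
      have rg: "range g = F" unfolding g_def by (rule range_from_nat_into[OF False F(1)])
      define An where "An n = \<Union>(g ` {..<n})" for n
      have inc: "incseq An"
      proof (rule incseq_SucI)
        fix n show "An n \<subseteq> An (Suc n)" unfolding An_def by (intro Union_mono image_mono) auto
      qed
      have gn: "good S H (An n)" for n
      proof -
        have "g ` {..<n} \<subseteq> H" using rg F(2) by blast
        then have "g ` {..<n} \<subseteq> generated_ring" using generated_ringI_Basic by blast
        moreover have "finite (g ` {..<n})" by simp
        ultimately have "An n \<in> generated_ring" unfolding An_def by (intro R.finite_Union)
        then obtain C where "finite C" "disjoint C" "C \<subseteq> H" "An n = \<Union>C" by (rule generated_ringE)
        then show ?thesis using good_fin[of C H S] by simp
      qed
      have "(\<Union>n. An n) = A" unfolding An_def F(3) rg[symmetric] by (auto simp: lessThan_iff) 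
      then show ?thesis using good_inc[OF inc gn] by simp
    qed
  qed
  have "{{M \<in> cntsets S. Ncount A M \<in> B} | A B. A \<in> T} \<subseteq> sets (Mh S H)"
  proof
    fix Y assume "Y \<in> {{M \<in> cntsets S. Ncount A M \<in> B} | A B. A \<in> T}"
    then obtain A B where AB: "Y = {M \<in> cntsets S. Ncount A M \<in> B}" "A \<in> T" by blast
    have "Ncount A -` B \<inter> space (Mh S H) \<in> sets (Mh S H)"
      using goodT[OF AB(2)] unfolding good_def by (rule measurable_sets) simp
    moreover have "Ncount A -` B \<inter> space (Mh S H) = Y" unfolding AB(1) space_Mh by auto
    ultimately show "Y \<in> sets (Mh S H)" by simp
  qed
  then have "sigma_sets (space (Mh S H)) {{M \<in> cntsets S. Ncount A M \<in> B} | A B. A \<in> T} \<subseteq> sets (Mh S H)"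
    by (rule sets.sigma_sets_subset)
  then show "CC S T \<subseteq> CC S H" unfolding CC_def space_Mh sets_Mh gens_def .
qed

end
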